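(* Let $\mathbf{a}=(a_1,\dots,a_n)\in\mathbb{Z}_{\ge0}^n$ with $\mathbf{a}\ne\mathbf{0}$ and $a_1\ge a_2\ge\dots\ge a_n$, let $0<\beta<1$, $\epsilon>0$, and $c_2>0$ with $0<c_2\epsilon<1$. If $1-\beta\ge \dfrac{c_2\epsilon}{n\|\mathbf{a}\|_1}$, then $$\mathrm{Vol}(Q_0\cap Q_1)\le \frac{1}{1+\frac{c_2\epsilon}{2n}}\cdot\frac{2^n}{n!}.$$
   Context: For $\mathbf{c}\in\mathbb{R}^n$, $r\ge 0$, $C(\mathbf{c},r)=\{\mathbf{x}\in\mathbb{R}^n:\|\mathbf{x}-\mathbf{c}\|_1\le r\}$. For $k=0,1,2,\dots$, $Q_k=C((1-\beta^k)\mathbf{a},\beta^k)$; in particular $Q_0=C(\mathbf{0},1)$ and $Q_1=C((1-\beta)\mathbf{a},\beta)$. *)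

theory Defs
  imports "HOL-Analysis.Analysis"
begin

text \<open>Points of R^n are modelled as functions on the index set {..<n}
  (coordinates 0..n-1), i.e. elements of the product space PiE {..<n} UNIV;
  volume is the product Lebesgue measure on it.\<close>

definition l1_ball :: "nat \<Rightarrow> (nat \<Rightarrow> real) \<Rightarrow> real \<Rightarrow> (nat \<Rightarrow> real) set" where
  "l1_ball n c r = {x \<in> PiE {..<n} (\<lambda>_. UNIV). (\<Sum>i<n. \<bar>x i - c i\<bar>) \<le> r}"

definition Qk :: "nat \<Rightarrow> (nat \<Rightarrow> nat) \<Rightarrow> real \<Rightarrow> nat \<Rightarrow> (nat \<Rightarrow> real) set" where
  "Qk n a \<beta> k = l1_ball n (\<lambda>i. (1 - \<beta> ^ k) * real (a i)) (\<beta> ^ k)"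

definition vol :: "nat \<Rightarrow> (nat \<Rightarrow> real) set \<Rightarrow> ennreal" where
  "vol n S = emeasure (PiM {..<n} (\<lambda>_. lborel)) S"

end

theory Submission
  imports Defs
begin


lemma ftc1:
  fixes a b :: real assumes "a \<le> b"
  shows "(\<integral>\<^sup>+y. ennreal ((b - y)^k) * indicator {a..b} y \<partial>lborel) = ennreal ((b-a)^(k+1)/(k+1))"
proof -
  have d: "((\<lambda>y. - ((b - y)^(k+1) / (k+1))) has_real_derivative (b - y)^k) (at y)" for y
    by (rule derivative_eq_intros refl | simp)+
  have "(\<integral>\<^sup>+y. ennreal ((b - y)^k) * indicator {a..b} y \<partial>lborel)
     = ennreal ((- ((b - b)^(k+1) / (k+1))) - (- ((b - a)^(k+1) / (k+1))))"
    by (rule nn_integral_FTC_Icc[OF _ d]) (use assms in auto)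
  then show ?thesis by simp
qed

lemma ftc2:
  fixes a b :: real assumes "a \<le> b"
  shows "(\<integral>\<^sup>+y. ennreal ((y - a)^k) * indicator {a..b} y \<partial>lborel) = ennreal ((b-a)^(k+1)/(k+1))"
proof -
  have d: "((\<lambda>y. ((y - a)^(k+1) / (k+1))) has_real_derivative (y - a)^k) (at y)" for y
    by (rule derivative_eq_intros refl | simp)+
  have "(\<integral>\<^sup>+y. ennreal ((y - a)^k) * indicator {a..b} y \<partial>lborel)
     = ennreal (((b - a)^(k+1) / (k+1)) - ((a - a)^(k+1) / (k+1)))"
    by (rule nn_integral_FTC_Icc[OF _ d]) (use assms in auto)
  then show ?thesis by simp
qed


lemma ball_meas[measurable]:
  fixes A :: "'a set" and p :: "'a \<Rightarrow> real"
  assumes "finite A"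
  shows "{x. (\<Sum>i\<in>A. \<bar>x i - p i\<bar>) \<le> t} \<inter> space (Pi\<^sub>M A (\<lambda>_. lborel)) \<in> sets (Pi\<^sub>M A (\<lambda>_. lborel))"
proof -
  have "{x. (\<Sum>i\<in>A. \<bar>x i - p i\<bar>) \<le> t} \<inter> space (Pi\<^sub>M A (\<lambda>_. lborel)) =
     (\<lambda>x. \<Sum>i\<in>A. \<bar>x i - p i\<bar>) -` {..t} \<inter> space (Pi\<^sub>M A (\<lambda>_. lborel))" by auto
  also have "\<dots> \<in> sets (Pi\<^sub>M A (\<lambda>_. lborel))" using assms by measurable
  finally show ?thesis .
qed

lemma ball_vol:
  fixes A :: "'a set" and p :: "'a \<Rightarrow> real"
  assumes "finite A" "t \<ge> 0"
  shows "emeasure (Pi\<^sub>M A (\<lambda>_. lborel)) ({x. (\<Sum>i\<in>A. \<bar>x i - p i\<bar>) \<le> t} \<inter> space (Pi\<^sub>M A (\<lambda>_. lborel)))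
     \<le> ennreal ((2*t)^card A / fact (card A))"
  using assms
proof (induction arbitrary: t rule: finite_induct)
  case (empty t)
  then show ?case by (simp add: PiM_empty)
next
  case (insert b A t)
  let ?M = "\<lambda>A. (Pi\<^sub>M A (\<lambda>_. lborel :: real measure))"
  let ?S = "\<lambda>A t. {x. (\<Sum>i\<in>A. \<bar>x i - p i\<bar>) \<le> t} \<inter> space (?M A)"
  define k where "k = card A"
  have ck: "card (insert b A) = Suc k" using insert.hyps by (simp add: k_def)
  interpret product_sigma_finite "\<lambda>_. lborel :: real measure"
    by standard
  have "emeasure (?M (insert b A)) (?S (insert b A) t) =
        nn_integral (?M (insert b A)) (\<lambda>x. indicator (?S (insert b A) t) x)"
    using insert.hyps by (subst nn_integral_indicator) auto
  also have "\<dots> = (\<integral>\<^sup>+ y. \<integral>\<^sup>+ x. indicator (?S (insert b A) t) (x(b := y)) \<partial>?M A \<partial>lborel)"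
    using insert.hyps by (intro product_nn_integral_insert_rev) auto
  also have "\<dots> = (\<integral>\<^sup>+ y. \<integral>\<^sup>+ x. indicator {p b - t..p b + t} y * indicator (?S A (t - \<bar>y - p b\<bar>)) x \<partial>?M A \<partial>lborel)"
  proof (intro nn_integral_cong)
    fix y x assume x: "x \<in> space (?M A)"
    have s: "(\<Sum>i\<in>insert b A. \<bar>(x(b:=y)) i - p i\<bar>) = \<bar>y - p b\<bar> + (\<Sum>i\<in>A. \<bar>x i - p i\<bar>)"
      using insert.hyps by (simp add: sum.insert_remove) (intro sum.cong, auto)
    have sp: "x(b:=y) \<in> space (?M (insert b A))" using x by (auto simp: space_PiM PiE_def extensional_def)
    have nn: "0 \<le> (\<Sum>i\<in>A. \<bar>x i - p i\<bar>)" by (simp add: sum_nonneg)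
    show "indicator (?S (insert b A) t) (x(b := y)) =
         (indicator {p b - t..p b + t} y * indicator (?S A (t - \<bar>y - p b\<bar>)) x :: ennreal)"
      using s sp x by (auto simp: indicator_def) (use nn in linarith)+
  qed
  also have "\<dots> = (\<integral>\<^sup>+ y. indicator {p b - t..p b + t} y * emeasure (?M A) (?S A (t - \<bar>y - p b\<bar>)) \<partial>lborel)"
  proof (intro nn_integral_cong)
    fix y :: real
    have "(\<integral>\<^sup>+ x. indicator {p b - t..p b + t} y * indicator (?S A (t - \<bar>y - p b\<bar>)) x \<partial>?M A)
        = indicator {p b - t..p b + t} y * (\<integral>\<^sup>+ x. indicator (?S A (t - \<bar>y - p b\<bar>)) x \<partial>?M A)"
      using insert.hyps by (subst nn_integral_cmult) auto
    also have "\<dots> = indicator {p b - t..p b + t} y * emeasure (?M A) (?S A (t - \<bar>y - p b\<bar>))"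
      using insert.hyps by (subst nn_integral_indicator) auto
    finally show "(\<integral>\<^sup>+ x. indicator {p b - t..p b + t} y * indicator (?S A (t - \<bar>y - p b\<bar>)) x \<partial>?M A)
        = indicator {p b - t..p b + t} y * emeasure (?M A) (?S A (t - \<bar>y - p b\<bar>))" .
  qed
  also have "\<dots> \<le> (\<integral>\<^sup>+ y. ennreal (2^k / fact k) * (ennreal ((p b + t - y)^k) * indicator {p b..p b + t} y)
      + ennreal (2^k / fact k) * (ennreal ((y - (p b - t))^k) * indicator {p b - t..p b} y) \<partial>lborel)"
  proof (intro nn_integral_mono)
    fix y
    show "indicator {p b - t..p b + t} y * emeasure (?M A) (?S A (t - \<bar>y - p b\<bar>))
      \<le> ennreal (2^k / fact k) * (ennreal ((p b + t - y)^k) * indicator {p b..p b + t} y)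
      + ennreal (2^k / fact k) * (ennreal ((y - (p b - t))^k) * indicator {p b - t..p b} y)"
    proof (cases "y \<in> {p b - t..p b + t}")
      case False then show ?thesis by simp
    next
      case True
      then have t0: "t - \<bar>y - p b\<bar> \<ge> 0" by auto
      have IH: "emeasure (?M A) (?S A (t - \<bar>y - p b\<bar>)) \<le> ennreal ((2*(t - \<bar>y - p b\<bar>))^k / fact k)"
        using insert.IH[OF t0] by (simp add: k_def)
      show ?thesis
      proof (cases "y \<ge> p b")
        case True
        have "ennreal ((2*(t - \<bar>y - p b\<bar>))^k / fact k) = ennreal (2^k / fact k) * ennreal ((p b + t - y)^k)"
        proof -
          have e: "(2*(t - \<bar>y - p b\<bar>))^k / fact k = 2^k / fact k * (p b + t - y)^k"
          proof -
            have h: "2*(t - \<bar>y - p b\<bar>) = 2*(p b + t - y)" using True by simp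
            show ?thesis unfolding h power_mult_distrib by simp
          qed
          have "0 \<le> p b + t - y" using \<open>y \<in> {p b - t..p b + t}\<close> by simp
          then show ?thesis unfolding e by (intro ennreal_mult) auto
        qed
        also have "\<dots> = ennreal (2^k / fact k) * (ennreal ((p b + t - y)^k) * indicator {p b..p b + t} y)"
          using True \<open>y \<in> {p b - t..p b + t}\<close> by simp
        finally have E: "ennreal ((2*(t - \<bar>y - p b\<bar>))^k / fact k) = ennreal (2^k / fact k) * (ennreal ((p b + t - y)^k) * indicator {p b..p b + t} y)" .
        have L: "indicator {p b - t..p b + t} y * emeasure (?M A) (?S A (t - \<bar>y - p b\<bar>)) = emeasure (?M A) (?S A (t - \<bar>y - p b\<bar>))"
          using \<open>y \<in> {p b - t..p b + t}\<close> by simp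
        show ?thesis unfolding L
          by (rule order_trans[OF IH]) (rule add_increasing2[OF zero_le], simp only: E)
      next
        case False
        have "ennreal ((2*(t - \<bar>y - p b\<bar>))^k / fact k) = ennreal (2^k / fact k) * ennreal ((y - (p b - t))^k)"
        proof -
          have e: "(2*(t - \<bar>y - p b\<bar>))^k / fact k = 2^k / fact k * (y - (p b - t))^k"
          proof -
            have h: "2*(t - \<bar>y - p b\<bar>) = 2*(y - (p b - t))" using False by simp
            show ?thesis unfolding h power_mult_distrib by simp
          qed
          have "0 \<le> y - (p b - t)" using \<open>y \<in> {p b - t..p b + t}\<close> by simp
          then show ?thesis unfolding e by (intro ennreal_mult) auto
        qed
        also have "\<dots> = ennreal (2^k / fact k) * (ennreal ((y - (p b - t))^k) * indicator {p b - t..p b} y)"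
          using False \<open>y \<in> {p b - t..p b + t}\<close> by simp
        finally have E: "ennreal ((2*(t - \<bar>y - p b\<bar>))^k / fact k) = ennreal (2^k / fact k) * (ennreal ((y - (p b - t))^k) * indicator {p b - t..p b} y)" .
        have L: "indicator {p b - t..p b + t} y * emeasure (?M A) (?S A (t - \<bar>y - p b\<bar>)) = emeasure (?M A) (?S A (t - \<bar>y - p b\<bar>))"
          using \<open>y \<in> {p b - t..p b + t}\<close> by simp
        show ?thesis unfolding L
          by (rule order_trans[OF IH]) (rule add_increasing[OF zero_le], simp only: E)
      qed
    qed
  qed
  also have "\<dots> = ennreal (2^k / fact k) * ennreal (t^(k+1)/(k+1)) + ennreal (2^k / fact k) * ennreal (t^(k+1)/(k+1))"
    (is "nn_integral _ (\<lambda>y. ?C * ?f1 y + ?C * ?f2 y) = _")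
  proof -
    have "(\<integral>\<^sup>+y. ?C * ?f1 y + ?C * ?f2 y \<partial>lborel) = (\<integral>\<^sup>+y. ?C * ?f1 y \<partial>lborel) + (\<integral>\<^sup>+y. ?C * ?f2 y \<partial>lborel)"
      by (rule nn_integral_add) auto
    also have "\<dots> = ?C * (\<integral>\<^sup>+y. ?f1 y \<partial>lborel) + ?C * (\<integral>\<^sup>+y. ?f2 y \<partial>lborel)"
      by (simp add: nn_integral_cmult)
    also have "(\<integral>\<^sup>+y. ?f1 y \<partial>lborel) = ennreal (t^(k+1)/(k+1))"
      using ftc1[of "p b" "p b + t" k] insert.prems by simp
    also have "(\<integral>\<^sup>+y. ?f2 y \<partial>lborel) = ennreal (t^(k+1)/(k+1))"
      using ftc2[of "p b - t" "p b" k] insert.prems by simp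
    finally show ?thesis .
  qed
  also have "\<dots> = ennreal ((2*t)^card (insert b A) / fact (card (insert b A)))"
    using insert.prems
  proof -
    have r: "2^k / fact k * (t^(k+1)/(k+1)) + 2^k / fact k * (t^(k+1)/(k+1)) = (2*t)^Suc k / fact (Suc k)"
      by (simp add: power_mult_distrib field_simps)
    have "ennreal (2^k / fact k) * ennreal (t^(k+1)/(k+1)) + ennreal (2^k / fact k) * ennreal (t^(k+1)/(k+1))
       = ennreal (2^k / fact k * (t^(k+1)/(k+1)) + 2^k / fact k * (t^(k+1)/(k+1)))"
      using insert.prems by (simp add: ennreal_mult[symmetric] ennreal_plus[symmetric] del: ennreal_plus)
    then show ?thesis unfolding ck r .
  qed
  finally show ?case .
qed


lemma arith_final:
  fixes u c :: real and n :: nat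
  assumes "0 < u" "u \<le> c" "c \<le> 1"
  shows "(1-c)^n \<le> 1/(1 + n*u)"
proof -
  have u1: "u \<le> 1" using assms by simp
  have "(1-c)^n \<le> (1-u)^n" using assms by (intro power_mono) auto
  moreover have "(1-u)^n * (1+u)^n \<le> 1"
  proof -
    have "(1-u)^n * (1+u)^n = (1 - u^2)^n" by (simp add: power_mult_distrib[symmetric] power2_eq_square algebra_simps)
    also have "\<dots> \<le> 1" using assms u1 by (intro power_le_one) (auto simp: power2_eq_square mult_le_one)
    finally show ?thesis .
  qed
  moreover have "1 + n*u \<le> (1+u)^n" using Bernoulli_inequality[of u n] assms by simp
  moreover have "0 < 1 + n*u" using assms by (simp add: add_pos_nonneg)
  moreover have "0 \<le> (1-u)^n" using u1 by simp
  ultimately have "(1-u)^n * (1 + n*u) \<le> 1"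
    by (meson mult_left_mono order_trans)
  then have "(1-u)^n \<le> 1/(1 + n*u)" using \<open>0 < 1 + n*u\<close> by (simp add: field_simps)
  with \<open>(1-c)^n \<le> (1-u)^n\<close> show ?thesis by linarith
qed

lemma ball_vol2:
  fixes A :: "'a set" and p :: "'a \<Rightarrow> real"
  assumes "finite A" "t < 0"
  shows "emeasure (Pi\<^sub>M A (\<lambda>_. lborel)) ({x. (\<Sum>i\<in>A. \<bar>x i - p i\<bar>) \<le> t} \<inter> space (Pi\<^sub>M A (\<lambda>_. lborel))) = 0"
proof -
  have "{x. (\<Sum>i\<in>A. \<bar>x i - p i\<bar>) \<le> t} = {}"
    using assms by (auto intro: sum_nonneg) (meson abs_ge_zero not_le order_less_le_trans sum_nonneg)
  then show ?thesis by simp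
qed



theorem mainTheorem11:
  fixes n :: nat and a :: "nat \<Rightarrow> nat" and \<beta> \<epsilon> c\<^sub>2 :: real
  assumes "\<exists>i<n. a i \<noteq> 0"
    and "\<And>i j. i \<le> j \<Longrightarrow> j < n \<Longrightarrow> a j \<le> a i"
    and "0 < \<beta>" and "\<beta> < 1" and "0 < \<epsilon>" and "0 < c\<^sub>2"
    and "0 < c\<^sub>2 * \<epsilon>" and "c\<^sub>2 * \<epsilon> < 1"
    and "1 - \<beta> \<ge> c\<^sub>2 * \<epsilon> / (real n * real (\<Sum>i<n. a i))"
  shows "vol n (Qk n a \<beta> 0 \<inter> Qk n a \<beta> 1)
           \<le> ennreal (1 / (1 + c\<^sub>2 * \<epsilon> / (2 * real n)) * 2 ^ n / fact n)"
proof -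
  define x where "x = c\<^sub>2 * \<epsilon>"
  define c where "c = (\<lambda>i. (1 - \<beta>) * real (a i))"
  define A' where "A' = {1..<n}"
  define m where "m = n - 1"
  let ?M = "\<lambda>A. Pi\<^sub>M A (\<lambda>_. lborel :: real measure)"
  obtain i0 where i0: "i0 < n" "a i0 \<noteq> 0" using assms(1) by blast
  have n1: "n \<ge> 1" using i0 by simp
  have IA: "{..<n} = insert 0 A'" using n1 by (auto simp: A'_def)
  have A'fin: "finite A'" and A'0: "0 \<notin> A'" by (auto simp: A'_def)
  have cardA: "card A' = m" by (simp add: A'_def m_def)
  have nm: "n = Suc m" using n1 by (simp add: m_def)
  have amax: "a i \<le> a 0" if "i < n" for i using assms(2)[of 0 i] that by simp
  have a0pos: "a 0 > 0" using amax[OF i0(1)] i0(2) by simp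
  have sumpos: "real (\<Sum>i<n. a i) > 0"
    using a0pos n1 by (simp add: sum_pos2[of "{..<n}" 0])
  have sumle: "real (\<Sum>i<n. a i) \<le> real n * real (a 0)"
  proof -
    have "(\<Sum>i<n. a i) \<le> (\<Sum>i<n. a 0)" by (intro sum_mono) (simp add: amax)
    then have "real (\<Sum>i<n. a i) \<le> real (n * a 0)" by (simp only: of_nat_le_iff) simp
    then show ?thesis by (simp only: of_nat_mult)
  qed
  have c0ge: "c 0 \<ge> x / (real n)^2"
  proof -
    have "x / (real n)^2 = x / (real n * real (\<Sum>i<n. a i)) * (real (\<Sum>i<n. a i) / real n)"
      using sumpos n1 by (simp add: field_simps power2_eq_square)
    also have "\<dots> \<le> (1 - \<beta>) * real (a 0)"
    proof (rule mult_mono)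
      show "x / (real n * real (\<Sum>i<n. a i)) \<le> 1 - \<beta>" using assms(9) by (simp add: x_def)
      show "real (\<Sum>i<n. a i) / real n \<le> real (a 0)" using sumle n1 by (simp add: field_simps)
    qed (use assms in \<open>auto intro!: divide_nonneg_nonneg sum_nonneg\<close>)
    finally show ?thesis by (simp add: c_def)
  qed
  have cnn: "c i \<ge> 0" for i using assms by (simp add: c_def)
  define S where "S = {y \<in> space (?M {..<n}). (\<Sum>i<n. \<bar>y i\<bar>) \<le> 1 \<and> (\<Sum>i<n. \<bar>y i - c i\<bar>) \<le> 1}"
  have Smeas[measurable]: "S \<in> sets (?M {..<n})"
  proof -
    have "S = (\<lambda>y. \<Sum>i<n. \<bar>y i\<bar>) -` {..1} \<inter> (\<lambda>y. \<Sum>i<n. \<bar>y i - c i\<bar>) -` {..1} \<inter> space (?M {..<n})"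
      by (auto simp: S_def)
    also have "\<dots> \<in> sets (?M {..<n})" by measurable
    finally show ?thesis .
  qed
  have sub: "Qk n a \<beta> 0 \<inter> Qk n a \<beta> 1 \<subseteq> S"
  proof
    fix y assume y: "y \<in> Qk n a \<beta> 0 \<inter> Qk n a \<beta> 1"
    then have "(\<Sum>i<n. \<bar>y i - c i\<bar>) \<le> \<beta>" by (simp add: Qk_def l1_ball_def c_def)
    then show "y \<in> S" using y assms(4) by (auto simp: Qk_def l1_ball_def S_def space_PiM)
  qed
  have "vol n (Qk n a \<beta> 0 \<inter> Qk n a \<beta> 1) \<le> emeasure (?M {..<n}) S"
    unfolding vol_def by (rule emeasure_mono[OF sub Smeas])
  also have "emeasure (?M {..<n}) S \<le> ennreal (1 / (1 + c\<^sub>2 * \<epsilon> / (2 * real n)) * 2 ^ n / fact n)"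
  proof (cases "c 0 \<le> 2")
    case False
    have "S = {}"
    proof (rule ccontr)
      assume "S \<noteq> {}"
      then obtain y where y: "y \<in> S" by blast
      have "\<bar>y 0\<bar> \<le> (\<Sum>i<n. \<bar>y i\<bar>)" using n1 by (intro member_le_sum) auto
      moreover have "\<bar>y 0 - c 0\<bar> \<le> (\<Sum>i<n. \<bar>y i - c i\<bar>)" using n1 by (intro member_le_sum) auto
      ultimately show False using y False by (auto simp: S_def)
    qed
    then show ?thesis by simp
  next
    case True
    let ?B = "\<lambda>p r. {z. (\<Sum>i\<in>A'. \<bar>z i - p i\<bar>) \<le> r} \<inter> space (?M A')"
    define C where "C = ennreal (2^m / fact m)"
    define h where "h = c 0 / 2"
    have Ebound: "emeasure (?M A') (?B p r) \<le> (if r \<ge> 0 then C * ennreal (r^m) else 0)" for p r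
    proof (cases "r \<ge> 0")
      case True
      have "emeasure (?M A') (?B p r) \<le> ennreal ((2*r)^m / fact m)"
        using ball_vol[OF A'fin True, of p] by (simp add: cardA)
      also have "\<dots> = C * ennreal (r^m)"
        unfolding C_def using True by (simp add: ennreal_mult[symmetric] power_mult_distrib)
      finally show ?thesis using True by simp
    next
      case False
      then show ?thesis using ball_vol2[OF A'fin, of r p] by simp
    qed
    interpret product_sigma_finite "\<lambda>_. lborel :: real measure" by standard
    have SmeasI: "S \<in> sets (?M (insert 0 A'))" using Smeas by (simp only: IA)
    have "emeasure (?M {..<n}) S = emeasure (?M (insert 0 A')) S" by (simp only: IA)
    also have "\<dots> = (\<integral>\<^sup>+ z. indicator S z \<partial>?M (insert 0 A'))"
      using SmeasI by simp
    also have "\<dots> = (\<integral>\<^sup>+ y. \<integral>\<^sup>+ z. indicator S (z(0 := y)) \<partial>?M A' \<partial>lborel)"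
      using A'fin A'0 SmeasI by (intro product_nn_integral_insert_rev) auto
    also have "\<dots> \<le> (\<integral>\<^sup>+ y. C * (ennreal ((1 - y)^m) * indicator {h..1} y)
                     + C * (ennreal ((y - (c 0 - 1))^m) * indicator {c 0 - 1..h} y) \<partial>lborel)"
    proof (intro nn_integral_mono)
      fix y :: real
      have split: "(\<Sum>i<n. \<bar>(z(0:=y)) i - p i\<bar>) = \<bar>y - p 0\<bar> + (\<Sum>i\<in>A'. \<bar>z i - p i\<bar>)" for z :: "nat \<Rightarrow> real" and p
      proof -
        have "(\<Sum>i<n. \<bar>(z(0:=y)) i - p i\<bar>) = (\<Sum>i\<in>insert 0 A'. \<bar>(z(0:=y)) i - p i\<bar>)" by (simp only: IA)
        also have "\<dots> = \<bar>y - p 0\<bar> + (\<Sum>i\<in>A'. \<bar>(z(0:=y)) i - p i\<bar>)" using A'fin A'0 by simp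
        also have "(\<Sum>i\<in>A'. \<bar>(z(0:=y)) i - p i\<bar>) = (\<Sum>i\<in>A'. \<bar>z i - p i\<bar>)"
          using A'0 by (intro sum.cong) auto
        finally show ?thesis .
      qed
      have ind1: "indicator S (z(0 := y)) \<le> (indicator (?B (\<lambda>_. 0) (1 - \<bar>y\<bar>)) z :: ennreal)" if "z \<in> space (?M A')" for z
        using split[of z "\<lambda>_. 0"] that by (auto simp: indicator_def S_def)
      have ind2: "indicator S (z(0 := y)) \<le> (indicator (?B c (1 - \<bar>y - c 0\<bar>)) z :: ennreal)" if "z \<in> space (?M A')" for z
        using split[of z c] that by (auto simp: indicator_def S_def)
      have I1: "(\<integral>\<^sup>+ z. indicator S (z(0 := y)) \<partial>?M A') \<le> emeasure (?M A') (?B (\<lambda>_. 0) (1 - \<bar>y\<bar>))"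
      proof -
        have "(\<integral>\<^sup>+ z. indicator S (z(0 := y)) \<partial>?M A') \<le> (\<integral>\<^sup>+ z. indicator (?B (\<lambda>_. 0) (1 - \<bar>y\<bar>)) z \<partial>?M A')"
          by (intro nn_integral_mono ind1)
        also have "\<dots> = emeasure (?M A') (?B (\<lambda>_. 0) (1 - \<bar>y\<bar>))"
          using ball_meas[OF A'fin] by simp
        finally show ?thesis .
      qed
      have I2: "(\<integral>\<^sup>+ z. indicator S (z(0 := y)) \<partial>?M A') \<le> emeasure (?M A') (?B c (1 - \<bar>y - c 0\<bar>))"
      proof -
        have "(\<integral>\<^sup>+ z. indicator S (z(0 := y)) \<partial>?M A') \<le> (\<integral>\<^sup>+ z. indicator (?B c (1 - \<bar>y - c 0\<bar>)) z \<partial>?M A')"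
          by (intro nn_integral_mono ind2)
        also have "\<dots> = emeasure (?M A') (?B c (1 - \<bar>y - c 0\<bar>))"
          using ball_meas[OF A'fin] by simp
        finally show ?thesis .
      qed
      show "(\<integral>\<^sup>+ z. indicator S (z(0 := y)) \<partial>?M A') \<le> C * (ennreal ((1 - y)^m) * indicator {h..1} y)
                     + C * (ennreal ((y - (c 0 - 1))^m) * indicator {c 0 - 1..h} y)"
      proof (cases "y \<ge> h")
        case True
        have y0: "y \<ge> 0" using True cnn[of 0] by (simp add: h_def)
        show ?thesis
        proof (cases "y \<le> 1")
          case True2: True
          have "(\<integral>\<^sup>+ z. indicator S (z(0 := y)) \<partial>?M A') \<le> C * ennreal ((1 - y)^m)"
            using order_trans[OF I1 Ebound[of "\<lambda>_. 0" "1 - \<bar>y\<bar>"]] y0 True2 by simp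
          also have "\<dots> = C * (ennreal ((1 - y)^m) * indicator {h..1} y)" using True True2 by simp
          finally show ?thesis by (rule order_trans) (rule add_increasing2, auto)
        next
          case False
          then show ?thesis
            using order_trans[OF I1 Ebound[of "\<lambda>_. 0" "1 - \<bar>y\<bar>"]] y0 by simp
        qed
      next
        case False
        have ab: "1 - \<bar>y - c 0\<bar> = y - (c 0 - 1)" using False cnn[of 0] by (simp add: h_def)
        show ?thesis
        proof (cases "y \<ge> c 0 - 1")
          case True2: True
          have "(\<integral>\<^sup>+ z. indicator S (z(0 := y)) \<partial>?M A') \<le> C * ennreal ((y - (c 0 - 1))^m)"
            using order_trans[OF I2 Ebound[of c "1 - \<bar>y - c 0\<bar>"]] True2 unfolding ab by simp
          also have "\<dots> = C * (ennreal ((y - (c 0 - 1))^m) * indicator {c 0 - 1..h} y)" using False True2 by simp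
          finally show ?thesis by (rule order_trans) (rule add_increasing, auto)
        next
          case False2: False
          then show ?thesis
            using order_trans[OF I2 Ebound[of c "1 - \<bar>y - c 0\<bar>"]] unfolding ab by simp
        qed
      qed
    qed
    also have "\<dots> = C * ennreal ((1 - h)^(m+1)/(m+1)) + C * ennreal ((1 - h)^(m+1)/(m+1))"
    proof -
      have "(\<integral>\<^sup>+ y. C * (ennreal ((1 - y)^m) * indicator {h..1} y)
                     + C * (ennreal ((y - (c 0 - 1))^m) * indicator {c 0 - 1..h} y) \<partial>lborel)
          = (\<integral>\<^sup>+ y. C * (ennreal ((1 - y)^m) * indicator {h..1} y) \<partial>lborel)
           + (\<integral>\<^sup>+ y. C * (ennreal ((y - (c 0 - 1))^m) * indicator {c 0 - 1..h} y) \<partial>lborel)"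
        by (rule nn_integral_add) auto
      also have "\<dots> = C * (\<integral>\<^sup>+ y. ennreal ((1 - y)^m) * indicator {h..1} y \<partial>lborel)
           + C * (\<integral>\<^sup>+ y. ennreal ((y - (c 0 - 1))^m) * indicator {c 0 - 1..h} y \<partial>lborel)"
        by (simp add: nn_integral_cmult)
      also have "(\<integral>\<^sup>+ y. ennreal ((1 - y)^m) * indicator {h..1} y \<partial>lborel) = ennreal ((1 - h)^(m+1)/(m+1))"
        using ftc1[of h 1 m] True by (simp add: h_def)
      also have "(\<integral>\<^sup>+ y. ennreal ((y - (c 0 - 1))^m) * indicator {c 0 - 1..h} y \<partial>lborel) = ennreal ((1 - h)^(m+1)/(m+1))"
        using ftc2[of "c 0 - 1" h m] True by (simp add: h_def)
      finally show ?thesis .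
    qed
    also have "\<dots> = ennreal (2^n * (1 - c 0 / 2)^n / fact n)"
    proof -
      have h1: "0 \<le> 1 - h" using True by (simp add: h_def)
      have r: "2^m / fact m * ((1 - h)^(m+1)/(m+1)) + 2^m / fact m * ((1 - h)^(m+1)/(m+1)) = 2^n * (1 - c 0 / 2)^n / fact n"
        unfolding nm h_def by (simp add: field_simps)
      have "C * ennreal ((1 - h)^(m+1)/(m+1)) + C * ennreal ((1 - h)^(m+1)/(m+1))
         = ennreal (2^m / fact m * ((1 - h)^(m+1)/(m+1)) + 2^m / fact m * ((1 - h)^(m+1)/(m+1)))"
        unfolding C_def using h1 by (simp add: ennreal_mult[symmetric] ennreal_plus[symmetric] del: ennreal_plus)
      then show ?thesis unfolding r .
    qed
    finally have "emeasure (?M {..<n}) S \<le> ennreal (2^n * (1 - c 0 / 2)^n / fact n)" .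
    also have "\<dots> \<le> ennreal (1 / (1 + c\<^sub>2 * \<epsilon> / (2 * real n)) * 2 ^ n / fact n)"
    proof (rule ennreal_leI)
      define u where "u = x / (2 * (real n)^2)"
      have u0: "0 < u" using assms n1 by (simp add: u_def x_def)
      have uc: "u \<le> c 0 / 2" using c0ge by (simp add: u_def divide_simps)
      have "(1 - c 0 / 2)^n \<le> 1 / (1 + real n * u)" using arith_final[OF u0 uc] True by simp
      also have "real n * u = c\<^sub>2 * \<epsilon> / (2 * real n)" using n1 by (simp add: u_def x_def power2_eq_square)
      finally have "(1 - c 0 / 2)^n \<le> 1 / (1 + c\<^sub>2 * \<epsilon> / (2 * real n))" .
      then have "2^n * (1 - c 0 / 2)^n \<le> 2^n * (1 / (1 + c\<^sub>2 * \<epsilon> / (2 * real n)))"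
        by (intro mult_left_mono) auto
      then show "2^n * (1 - c 0 / 2)^n / fact n \<le> 1 / (1 + c\<^sub>2 * \<epsilon> / (2 * real n)) * 2 ^ n / fact n"
        by (intro divide_right_mono) (auto simp: mult.commute)
    qed
    finally show ?thesis .
  qed
  finally show ?thesis .
qed


end
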